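(* Consider the following optimization problem over user association $\mathbf{x}=(x_{ij})$, resource allocation $\mathbf{y}=(y_{ij})$ and power $\mathbf{p}=(p_i)$, $i\in\mathcal I=\{1,\dots,I\}$, $j\in\mathcal J=\{1,\dots,J\}$: \[ \max_{\mathbf x,\mathbf y,\mathbf p}\ \sum_{j\in\mathcal J}\omega_j\log_2\Big(KB\sum_{i\in\mathcal I}y_{ij}\log_2(1+\eta_{ij})\Big) \] subject to $\eta_{ij}=\dfrac{p_i g_{ij}}{\sum_{k\in\mathcal I\setminus\{i\}}d_k p_k g_{kj}+\sigma^2}$ for all $i,j$; $\sum_{i\in\mathcal I}x_{ij}=1$ for all $j$; $d_i=\sum_{j\in\mathcal J}y_{ij}$ for all $i$; $0\le p_i\le P_i$ for all $i$; $0\le d_i\le 1$ for all $i$; $0\le y_{ij}\le x_{ij}$ and $x_{ij}\in\{0,1\}$ for all $i,j$. Let $(\mathbf x^*,\mathbf y^*,\mathbf p^* )$ be an optimal solution, let $d_i^*=\sum_{j\in\mathcal J}y^*_{ij}$, and let $\mathcal J_i=\{j\in\mathcal J: x^*_{ij}=1\}$. Then \[ y^*_{ij}=\frac{\omega_j x^*_{ij} d^*_i}{\sum_{l\in\mathcal J}\omega_l x^*_{il}}\qquad\text{for all } i\in\mathcal I,\ j\in\mathcal J_i, \] where the right-hand side is defined to be $0$ in the case $d_i^*=0$ and $x^*_{ij}=0$ for all $j\in\mathcal J$.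
   Context: Downlink heterogeneous network with $I$ base stations (BSs) and $J$ users. $x_{ij}\in\{0,1\}$ indicates that user $j$ is associated with BS $i$; $y_{ij}$ is the fraction of time-frequency resource blocks BS $i$ allocates to user $j$; $d_i$ is the load of BS $i$; $p_i$ is the per-resource-block transmit power of BS $i$ with maximum $P_i>0$. The constants $K>0$ (number of resource blocks), $B>0$ (bandwidth per block), channel gains $g_{ij}>0$, noise power $\sigma^2>0$ and user priorities $\omega_j>0$ are given. $\eta_{ij}$ is the (load-coupled) average SINR of user $j$ served by BS $i$. *)

theory Defs
  imports "HOL-Analysis.Analysis" "HOL-Library.Extended_Real"
begin

text \<open>BSs are indexed by {1..nI}, users by {1..nJ}. The load of BS i is
  d_i = sum over users of y i j.\<close>

definition load :: "nat \<Rightarrow> (nat \<Rightarrow> nat \<Rightarrow> real) \<Rightarrow> nat \<Rightarrow> real" where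
  "load nJ y i = (\<Sum>j\<in>{1..nJ}. y i j)"

definition sinr :: "nat \<Rightarrow> nat \<Rightarrow> (nat \<Rightarrow> nat \<Rightarrow> real) \<Rightarrow> real \<Rightarrow>
    (nat \<Rightarrow> nat \<Rightarrow> real) \<Rightarrow> (nat \<Rightarrow> real) \<Rightarrow> nat \<Rightarrow> nat \<Rightarrow> real" where
  "sinr nI nJ g \<sigma>2 y p i j =
     p i * g i j / ((\<Sum>k\<in>{1..nI} - {i}. load nJ y k * p k * g k j) + \<sigma>2)"

definition rate :: "nat \<Rightarrow> nat \<Rightarrow> real \<Rightarrow> real \<Rightarrow> (nat \<Rightarrow> nat \<Rightarrow> real) \<Rightarrow> real \<Rightarrow>
    (nat \<Rightarrow> nat \<Rightarrow> real) \<Rightarrow> (nat \<Rightarrow> real) \<Rightarrow> nat \<Rightarrow> real" where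
  "rate nI nJ K B g \<sigma>2 y p j =
     K * B * (\<Sum>i\<in>{1..nI}. y i j * log 2 (1 + sinr nI nJ g \<sigma>2 y p i j))"

text \<open>log2 extended to nonpositive arguments by -infinity (the natural value
  of the objective term when a user's rate is zero).\<close>
definition elog2 :: "real \<Rightarrow> ereal" where
  "elog2 r = (if r > 0 then ereal (log 2 r) else -\<infinity>)"

definition objective :: "nat \<Rightarrow> nat \<Rightarrow> real \<Rightarrow> real \<Rightarrow> (nat \<Rightarrow> nat \<Rightarrow> real) \<Rightarrow> real \<Rightarrow>
    (nat \<Rightarrow> real) \<Rightarrow> (nat \<Rightarrow> nat \<Rightarrow> real) \<Rightarrow> (nat \<Rightarrow> real) \<Rightarrow> ereal" where
  "objective nI nJ K B g \<sigma>2 \<omega> y p =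
     (\<Sum>j\<in>{1..nJ}. ereal (\<omega> j) * elog2 (rate nI nJ K B g \<sigma>2 y p j))"

definition feasible :: "nat \<Rightarrow> nat \<Rightarrow> (nat \<Rightarrow> real) \<Rightarrow>
    (nat \<Rightarrow> nat \<Rightarrow> real) \<Rightarrow> (nat \<Rightarrow> nat \<Rightarrow> real) \<Rightarrow> (nat \<Rightarrow> real) \<Rightarrow> bool" where
  "feasible nI nJ P x y p \<longleftrightarrow>
     (\<forall>j\<in>{1..nJ}. (\<Sum>i\<in>{1..nI}. x i j) = 1) \<and>
     (\<forall>i\<in>{1..nI}. 0 \<le> p i \<and> p i \<le> P i) \<and>
     (\<forall>i\<in>{1..nI}. 0 \<le> load nJ y i \<and> load nJ y i \<le> 1) \<and>
     (\<forall>i\<in>{1..nI}. \<forall>j\<in>{1..nJ}. 0 \<le> y i j \<and> y i j \<le> x i j \<and> x i j \<in> {0, 1})"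

definition optimal :: "nat \<Rightarrow> nat \<Rightarrow> real \<Rightarrow> real \<Rightarrow> (nat \<Rightarrow> nat \<Rightarrow> real) \<Rightarrow> real \<Rightarrow>
    (nat \<Rightarrow> real) \<Rightarrow> (nat \<Rightarrow> real) \<Rightarrow>
    (nat \<Rightarrow> nat \<Rightarrow> real) \<Rightarrow> (nat \<Rightarrow> nat \<Rightarrow> real) \<Rightarrow> (nat \<Rightarrow> real) \<Rightarrow> bool" where
  "optimal nI nJ K B g \<sigma>2 \<omega> P x y p \<longleftrightarrow>
     feasible nI nJ P x y p \<and>
     (\<forall>x' y' p'. feasible nI nJ P x' y' p' \<longrightarrow>
        objective nI nJ K B g \<sigma>2 \<omega> y' p' \<le> objective nI nJ K B g \<sigma>2 \<omega> y p)"

end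

theory Submission
  imports Defs
begin

lemma ln_strict: "0 < (x::real) \<Longrightarrow> x \<noteq> 1 \<Longrightarrow> ln x < x - 1"
  by (metis ln_eq_minus_one ln_le_minus_one order_le_less)

lemma gibbs:
  fixes w y :: "nat \<Rightarrow> real"
  assumes fin: "finite S" and c: "c > 0" and w: "\<forall>j\<in>S. w j > 0" and y: "\<forall>j\<in>S. y j > 0"
    and s: "(\<Sum>j\<in>S. y j) = c * (\<Sum>j\<in>S. w j)"
    and ex: "\<exists>j\<in>S. y j \<noteq> c * w j"
  shows "(\<Sum>j\<in>S. w j * ln (y j / (c * w j))) < 0"
proof -
  have "(\<Sum>j\<in>S. w j * ln (y j / (c * w j))) < (\<Sum>j\<in>S. w j * (y j / (c * w j) - 1))"
  proof (rule sum_strict_mono_ex1[OF fin])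
    show "\<forall>x\<in>S. w x * ln (y x / (c * w x)) \<le> w x * (y x / (c * w x) - 1)"
      using w y c by (auto intro!: mult_left_mono ln_le_minus_one)
    show "\<exists>a\<in>S. w a * ln (y a / (c * w a)) < w a * (y a / (c * w a) - 1)"
    proof -
      from ex obtain a where a: "a \<in> S" "y a \<noteq> c * w a" by blast
      have pos: "y a / (c * w a) > 0" using a w y c by auto
      have "y a / (c * w a) \<noteq> 1" using a w c by (auto simp: field_simps)
      then have "ln (y a / (c * w a)) < y a / (c * w a) - 1" using ln_strict pos by blast
      then show ?thesis using a w by (intro bexI[of _ a]) auto
    qed
  qed
  also have "(\<Sum>j\<in>S. w j * (y j / (c * w j) - 1)) = (\<Sum>j\<in>S. y j / c - w j)"
    using w c by (intro sum.cong) (auto simp: field_simps)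
  also have "\<dots> = 0" using s c by (simp add: sum_subtractf sum_divide_distrib[symmetric])
  finally show ?thesis .
qed

lemma sinr_cong:
  assumes "\<forall>k\<in>{1..nI}. load nJ y' k = load nJ y k"
  shows "sinr nI nJ g \<sigma>2 y' p i j = sinr nI nJ g \<sigma>2 y p i j"
  unfolding sinr_def using assms by (auto intro!: sum.cong arg_cong2[where f="(/)"])

lemma obj_real:
  assumes "\<forall>j\<in>{1..nJ}. rate nI nJ K B g \<sigma>2 y p j > 0"
  shows "objective nI nJ K B g \<sigma>2 \<omega> y p = ereal (\<Sum>j\<in>{1..nJ}. \<omega> j * log 2 (rate nI nJ K B g \<sigma>2 y p j))"
  unfolding objective_def sum_ereal[symmetric] using assms
  by (intro sum.cong) (auto simp: elog2_def)

lemma obj_minf: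
  assumes "\<forall>j\<in>{1..nJ}. \<omega> j > 0" and "j0 \<in> {1..nJ}" and "rate nI nJ K B g \<sigma>2 y p j0 \<le> 0"
  shows "objective nI nJ K B g \<sigma>2 \<omega> y p = -\<infinity>"
proof -
  let ?f = "\<lambda>j. ereal (\<omega> j) * elog2 (rate nI nJ K B g \<sigma>2 y p j)"
  have "\<omega> j0 > 0" using assms by auto
  then have fj: "?f j0 = -\<infinity>" using assms(3) by (simp add: elog2_def)
  have nf: "\<forall>j\<in>{1..nJ}. ?f j \<noteq> \<infinity>" using assms(1) by (auto simp: elog2_def)
  have "objective nI nJ K B g \<sigma>2 \<omega> y p = ?f j0 + (\<Sum>j\<in>{1..nJ}-{j0}. ?f j)"
    unfolding objective_def using assms(2) by (simp add: sum.remove)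
  moreover have "(\<Sum>j\<in>{1..nJ}-{j0}. ?f j) \<noteq> \<infinity>" using nf by (simp add: sum_Pinfty)
  ultimately show ?thesis using fj by simp
qed

lemma sum_single:
  assumes "finite A" "a \<in> A" "\<forall>i\<in>A. i \<noteq> a \<longrightarrow> f i = 0"
  shows "sum f A = (f a :: real)"
  using assms by (simp add: sum.remove)


theorem theorem1:
  fixes nI nJ :: nat and K B \<sigma>2 :: real
    and g :: "nat \<Rightarrow> nat \<Rightarrow> real" and \<omega> P :: "nat \<Rightarrow> real"
    and xs ys :: "nat \<Rightarrow> nat \<Rightarrow> real" and ps :: "nat \<Rightarrow> real"
  assumes "K > 0" and "B > 0" and "\<sigma>2 > 0"
    and "\<forall>i\<in>{1..nI}. \<forall>j\<in>{1..nJ}. g i j > 0"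
    and "\<forall>j\<in>{1..nJ}. \<omega> j > 0"
    and "\<forall>i\<in>{1..nI}. P i > 0"
    and "optimal nI nJ K B g \<sigma>2 \<omega> P xs ys ps"
  shows "\<forall>i\<in>{1..nI}. \<forall>j\<in>{j\<in>{1..nJ}. xs i j = 1}.
           ys i j = \<omega> j * xs i j * load nJ ys i / (\<Sum>l\<in>{1..nJ}. \<omega> l * xs i l)"
proof (intro ballI)
  fix i0 j0 assume i0: "i0 \<in> {1..nI}" and j0S: "j0 \<in> {j\<in>{1..nJ}. xs i0 j = 1}"
  note K = assms(1) and B = assms(2) and sig = assms(3) and gpos = assms(4)
    and wpos = assms(5) and Ppos = assms(6)
  have feas: "feasible nI nJ P xs ys ps" and opt: "\<And>x' y' p'. feasible nI nJ P x' y' p' \<Longrightarrow>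
        objective nI nJ K B g \<sigma>2 \<omega> y' p' \<le> objective nI nJ K B g \<sigma>2 \<omega> ys ps"
    using assms(7) unfolding optimal_def by auto
  have xsum: "\<forall>j\<in>{1..nJ}. (\<Sum>i\<in>{1..nI}. xs i j) = 1"
    and pb: "\<forall>i\<in>{1..nI}. 0 \<le> ps i \<and> ps i \<le> P i"
    and lb: "\<forall>i\<in>{1..nI}. 0 \<le> load nJ ys i \<and> load nJ ys i \<le> 1"
    and yb: "\<forall>i\<in>{1..nI}. \<forall>j\<in>{1..nJ}. 0 \<le> ys i j \<and> ys i j \<le> xs i j \<and> xs i j \<in> {0, 1}"
    using feas unfolding feasible_def by auto
  define S where "S = {j\<in>{1..nJ}. xs i0 j = 1}"
  have j0: "j0 \<in> {1..nJ}" "xs i0 j0 = 1" using j0S by auto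
  have finS: "finite S" unfolding S_def by auto
  have nI1: "1 \<le> nI" and nJ1: "1 \<le> nJ" using i0 j0 by auto
  have yzero: "ys i j = 0" if "i \<in> {1..nI}" "j \<in> {1..nJ}" "xs i j \<noteq> 1" for i j
    using yb that by force
  have other: "xs k j = 0" if "j \<in> {1..nJ}" "xs i j = 1" "i \<in> {1..nI}" "k \<in> {1..nI}" "k \<noteq> i" for i j k
  proof -
    have "(\<Sum>k\<in>{1..nI}. xs k j) = xs i j + (\<Sum>k\<in>{1..nI}-{i}. xs k j)"
      using that by (simp add: sum.remove)
    then have "(\<Sum>k\<in>{1..nI}-{i}. xs k j) = 0" using xsum that by auto
    moreover have "\<forall>k\<in>{1..nI}-{i}. 0 \<le> xs k j"
    proof
      fix k assume "k \<in> {1..nI}-{i}"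
      then have "xs k j \<in> {0,1}" using yb that(1) by blast
      then show "0 \<le> xs k j" by auto
    qed
    ultimately show ?thesis using that by (subst (asm) sum_nonneg_eq_0_iff) auto
  qed
  \<comment> \<open>a feasible point with finite objective\<close>
  define x0 :: "nat \<Rightarrow> nat \<Rightarrow> real" where "x0 = (\<lambda>i j. if i = 1 then 1 else 0)"
  define y0 :: "nat \<Rightarrow> nat \<Rightarrow> real" where "y0 = (\<lambda>i j. if i = 1 then 1 / real nJ else 0)"
  have load0: "load nJ y0 k = (if k = 1 then 1 else 0)" for k
    unfolding load_def y0_def using nJ1 by auto
  have feas0: "feasible nI nJ P x0 y0 P"
    unfolding feasible_def load0 using nI1 nJ1 Ppos
    by (auto simp: x0_def y0_def sum.delta)
  have rate0: "rate nI nJ K B g \<sigma>2 y0 P j > 0" if j: "j \<in> {1..nJ}" for j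
  proof -
    have den: "(\<Sum>k\<in>{1..nI} - {1}. load nJ y0 k * P k * g k j) + \<sigma>2 > 0"
      using sig by (auto simp: load0)
    have "sinr nI nJ g \<sigma>2 y0 P 1 j > 0" unfolding sinr_def
      using den Ppos gpos nI1 j by auto
    then have c: "log 2 (1 + sinr nI nJ g \<sigma>2 y0 P 1 j) > 0" by simp
    have "(\<Sum>i\<in>{1..nI}. y0 i j * log 2 (1 + sinr nI nJ g \<sigma>2 y0 P i j))
        = y0 1 j * log 2 (1 + sinr nI nJ g \<sigma>2 y0 P 1 j)"
      using nI1 by (intro sum_single) (auto simp: y0_def)
    then show ?thesis unfolding rate_def using c K B nJ1 by (simp add: y0_def)
  qed
  have "objective nI nJ K B g \<sigma>2 \<omega> y0 P \<noteq> -\<infinity>"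
    using obj_real[of nJ nI K B g \<sigma>2 y0 P \<omega>] rate0 by simp
  then have objfin: "objective nI nJ K B g \<sigma>2 \<omega> ys ps \<noteq> -\<infinity>"
    using opt[OF feas0] by auto
  have ratepos: "rate nI nJ K B g \<sigma>2 ys ps j > 0" if "j \<in> {1..nJ}" for j
    using obj_minf[OF wpos that] objfin by force
  define c where "c = (\<lambda>j. log 2 (1 + sinr nI nJ g \<sigma>2 ys ps i0 j))"
  have cnn: "c j \<ge> 0" if "j \<in> {1..nJ}" for j
  proof -
    have den: "(\<Sum>k\<in>{1..nI} - {i0}. load nJ ys k * ps k * g k j) + \<sigma>2 > 0"
    proof (intro add_nonneg_pos sum_nonneg)
      fix k assume k: "k \<in> {1..nI} - {i0}"
      then have "0 \<le> load nJ ys k" "0 \<le> ps k" "0 < g k j" using lb pb gpos that by auto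
      then show "0 \<le> load nJ ys k * ps k * g k j" by simp
    qed (use sig in auto)
    have "0 \<le> ps i0" "0 < g i0 j" using pb gpos i0 that by auto
    then have "sinr nI nJ g \<sigma>2 ys ps i0 j \<ge> 0" unfolding sinr_def
      using den by (auto intro!: divide_nonneg_pos)
    then show ?thesis unfolding c_def by simp
  qed
  have rate_S: "rate nI nJ K B g \<sigma>2 y ps j = K * B * (y i0 j * c j)"
    if j: "j \<in> S" and lo: "\<forall>k\<in>{1..nI}. load nJ y k = load nJ ys k"
      and yz: "\<forall>k\<in>{1..nI}. k \<noteq> i0 \<longrightarrow> y k j = 0" for y j
  proof -
    have "(\<Sum>i\<in>{1..nI}. y i j * log 2 (1 + sinr nI nJ g \<sigma>2 y ps i j))
        = y i0 j * log 2 (1 + sinr nI nJ g \<sigma>2 y ps i0 j)"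
      using i0 yz by (intro sum_single) auto
    then show ?thesis unfolding rate_def c_def using sinr_cong[OF lo] by simp
  qed
  have ysz: "\<forall>k\<in>{1..nI}. k \<noteq> i0 \<longrightarrow> ys k j = 0" if "j \<in> S" for j
    using that other[of j i0] yzero i0 unfolding S_def by auto
  have lo0: "\<forall>k\<in>{1..nI}. load nJ ys k = load nJ ys k" by simp
  have ysS: "ys i0 j > 0 \<and> c j > 0" if "j \<in> S" for j
  proof -
    have jj: "j \<in> {1..nJ}" using that S_def by auto
    have "K * B * (ys i0 j * c j) > 0" using rate_S[OF that lo0 ysz[OF that]] ratepos[OF jj] by simp
    moreover have "K * B > 0" using K B by simp
    ultimately have "ys i0 j * c j > 0" by (rule zero_less_mult_pos)
    moreover have "ys i0 j \<ge> 0" using yb i0 jj by auto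
    ultimately show ?thesis using cnn[OF jj] by (simp add: zero_less_mult_iff)
  qed
  define d where "d = load nJ ys i0"
  have dS: "d = (\<Sum>j\<in>S. ys i0 j)"
  proof -
    have "d = (\<Sum>j\<in>S. ys i0 j) + (\<Sum>j\<in>{1..nJ}-S. ys i0 j)"
      unfolding d_def load_def S_def by (subst sum.subset_diff[of "{j\<in>{1..nJ}. xs i0 j = 1}"]) auto
    moreover have "(\<Sum>j\<in>{1..nJ}-S. ys i0 j) = 0" using yzero i0 unfolding S_def by auto
    ultimately show ?thesis by simp
  qed
  have j0S': "j0 \<in> S" using j0 S_def by auto
  have dpos: "d > 0"
  proof -
    have "ys i0 j0 \<le> (\<Sum>j\<in>S. ys i0 j)" using ysS finS j0S' by (intro member_le_sum) (auto simp: less_imp_le)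
    then show ?thesis unfolding dS using ysS[OF j0S'] by linarith
  qed
  have d1: "d \<le> 1" using lb i0 d_def by auto
  define W where "W = (\<Sum>l\<in>{1..nJ}. \<omega> l * xs i0 l)"
  have WS: "W = (\<Sum>l\<in>S. \<omega> l)"
  proof -
    have "W = (\<Sum>l\<in>S. \<omega> l * xs i0 l) + (\<Sum>l\<in>{1..nJ}-S. \<omega> l * xs i0 l)"
      unfolding W_def S_def by (subst sum.subset_diff[of "{j\<in>{1..nJ}. xs i0 j = 1}"]) auto
    moreover have "(\<Sum>l\<in>{1..nJ}-S. \<omega> l * xs i0 l) = 0"
    proof (intro sum.neutral ballI)
      fix l assume l: "l \<in> {1..nJ}-S"
      then have l1: "l \<in> {1..nJ}" "xs i0 l \<noteq> 1" unfolding S_def by auto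
      then have "xs i0 l \<in> {0,1}" using yb i0 by blast
      with l1 show "\<omega> l * xs i0 l = 0" by auto
    qed
    moreover have "(\<Sum>l\<in>S. \<omega> l * xs i0 l) = (\<Sum>l\<in>S. \<omega> l)" unfolding S_def by auto
    ultimately show ?thesis by simp
  qed
  have wS: "\<forall>j\<in>S. \<omega> j > 0" using wpos S_def by auto
  have Wpos: "W > 0"
  proof -
    have "\<omega> j0 \<le> (\<Sum>j\<in>S. \<omega> j)" using wS finS j0S' by (intro member_le_sum) (auto simp: less_imp_le)
    then show ?thesis unfolding WS using wS j0S' by force
  qed
  have wleW: "\<omega> j \<le> W" if "j \<in> S" for j
    unfolding WS using wS finS that by (intro member_le_sum) auto
  define q where "q = (\<lambda>j. d / W * \<omega> j)"
  show "ys i0 j0 = \<omega> j0 * xs i0 j0 * load nJ ys i0 / (\<Sum>l\<in>{1..nJ}. \<omega> l * xs i0 l)"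
  proof (rule ccontr)
    assume ne: "\<not> ?thesis"
    then have ne': "ys i0 j0 \<noteq> d / W * \<omega> j0" using j0 unfolding d_def W_def by auto
    define y' where "y' = (\<lambda>i j. if i = i0 \<and> j \<in> S then q j else ys i j)"
    have qpos: "q j > 0" if "j \<in> S" for j using that wS dpos Wpos q_def by auto
    have qle: "q j \<le> 1" if "j \<in> S" for j
    proof -
      have "q j \<le> d / W * W" unfolding q_def using wleW[OF that] dpos Wpos by (intro mult_left_mono) auto
      then show ?thesis using Wpos d1 by simp
    qed
    have sq: "(\<Sum>j\<in>S. q j) = d" unfolding q_def sum_distrib_left[symmetric] WS[symmetric]
      using Wpos by simp
    have loadeq: "\<forall>k\<in>{1..nI}. load nJ y' k = load nJ ys k"
    proof
      fix k assume k: "k \<in> {1..nI}"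
      show "load nJ y' k = load nJ ys k"
      proof (cases "k = i0")
        case False then show ?thesis unfolding load_def y'_def by simp
      next
        case True
        have "load nJ y' k = (\<Sum>j\<in>S. y' i0 j) + (\<Sum>j\<in>{1..nJ}-S. y' i0 j)"
          unfolding True load_def S_def by (subst sum.subset_diff[of "{j\<in>{1..nJ}. xs i0 j = 1}"]) auto
        also have "\<dots> = (\<Sum>j\<in>S. q j) + (\<Sum>j\<in>{1..nJ}-S. ys i0 j)" unfolding y'_def by simp
        also have "(\<Sum>j\<in>{1..nJ}-S. ys i0 j) = 0" using yzero i0 unfolding S_def by auto
        finally show ?thesis using sq True d_def by simp
      qed
    qed
    have feas': "feasible nI nJ P xs y' ps"
      unfolding feasible_def
    proof (intro conjI)
      show "\<forall>i\<in>{1..nI}. 0 \<le> load nJ y' i \<and> load nJ y' i \<le> 1" using loadeq lb by simp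
      show "\<forall>i\<in>{1..nI}. \<forall>j\<in>{1..nJ}. 0 \<le> y' i j \<and> y' i j \<le> xs i j \<and> xs i j \<in> {0, 1}"
        using yb qpos qle unfolding y'_def S_def by (auto simp: less_imp_le)
    qed (use xsum pb in auto)
    have rate_off: "rate nI nJ K B g \<sigma>2 y' ps j = rate nI nJ K B g \<sigma>2 ys ps j"
      if "j \<notin> S" for j
      unfolding rate_def using sinr_cong[OF loadeq] that by (simp add: y'_def)
    have y'z: "\<forall>k\<in>{1..nI}. k \<noteq> i0 \<longrightarrow> y' k j = 0" if "j \<in> S" for j
      using ysz[OF that] unfolding y'_def by auto
    have rate'pos: "rate nI nJ K B g \<sigma>2 y' ps j > 0" if "j \<in> {1..nJ}" for j
    proof (cases "j \<in> S")
      case True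
      then show ?thesis using rate_S[OF True loadeq y'z[OF True]] qpos ysS K B
        by (simp add: y'_def)
    next
      case False then show ?thesis using rate_off ratepos that by simp
    qed
    have le: "(\<Sum>j\<in>{1..nJ}. \<omega> j * log 2 (rate nI nJ K B g \<sigma>2 y' ps j))
             \<le> (\<Sum>j\<in>{1..nJ}. \<omega> j * log 2 (rate nI nJ K B g \<sigma>2 ys ps j))"
      using opt[OF feas'] obj_real[of nJ nI K B g \<sigma>2 y' ps \<omega>] obj_real[of nJ nI K B g \<sigma>2 ys ps \<omega>]
        rate'pos ratepos by simp
    define D where "D = (\<lambda>j. \<omega> j * log 2 (rate nI nJ K B g \<sigma>2 y' ps j) - \<omega> j * log 2 (rate nI nJ K B g \<sigma>2 ys ps j))"
    have Dle: "(\<Sum>j\<in>{1..nJ}. D j) \<le> 0" using le unfolding D_def by (simp add: sum_subtractf)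
    have Doff: "(\<Sum>j\<in>{1..nJ}-S. D j) = 0" unfolding D_def using rate_off by simp
    have DS: "D j = - (\<omega> j * ln (ys i0 j / (d / W * \<omega> j))) / ln 2" if j: "j \<in> S" for j
    proof -
      have r1: "rate nI nJ K B g \<sigma>2 y' ps j = K * B * (q j * c j)"
        using rate_S[OF j loadeq y'z[OF j]] j by (simp add: y'_def)
      have r2: "rate nI nJ K B g \<sigma>2 ys ps j = K * B * (ys i0 j * c j)"
        using rate_S[OF j lo0 ysz[OF j]] by simp
      have pos: "q j > 0" "ys i0 j > 0" "c j > 0" using qpos[OF j] ysS[OF j] by auto
      have e0: "D j = \<omega> j * (ln (K * B * (q j * c j)) - ln (K * B * (ys i0 j * c j))) / ln 2"
        unfolding D_def r1 r2 log_def by (simp add: field_simps)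
      have e1: "ln (K * B * (q j * c j)) - ln (K * B * (ys i0 j * c j)) = ln (q j) - ln (ys i0 j)"
        using pos K B by (simp add: ln_mult)
      have e2: "ln (ys i0 j / (d / W * \<omega> j)) = ln (ys i0 j) - ln (q j)"
        using ln_divide_pos[OF pos(2) pos(1)] by (simp add: q_def)
      show ?thesis unfolding e0 e1 e2 by (simp add: algebra_simps)
    qed
    have g: "(\<Sum>j\<in>S. \<omega> j * ln (ys i0 j / (d / W * \<omega> j))) < 0"
    proof (rule gibbs[OF finS _ wS])
      show "0 < d / W" using dpos Wpos by simp
      show "\<forall>j\<in>S. 0 < ys i0 j" using ysS by auto
      show "(\<Sum>j\<in>S. ys i0 j) = d / W * (\<Sum>j\<in>S. \<omega> j)" using dS WS Wpos by simp
      show "\<exists>j\<in>S. ys i0 j \<noteq> d / W * \<omega> j" using ne' j0S' by auto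
    qed
    have "(\<Sum>j\<in>S. D j) = - (\<Sum>j\<in>S. \<omega> j * ln (ys i0 j / (d / W * \<omega> j))) / ln 2"
      using DS by (simp add: sum_divide_distrib[symmetric] sum_negf)
    also have "\<dots> > 0" using g by (intro divide_pos_pos) auto
    finally have "(\<Sum>j\<in>S. D j) > 0" .
    moreover have "(\<Sum>j\<in>{1..nJ}. D j) = (\<Sum>j\<in>S. D j) + (\<Sum>j\<in>{1..nJ}-S. D j)"
      unfolding S_def by (subst sum.subset_diff[of "{j\<in>{1..nJ}. xs i0 j = 1}"]) auto
    ultimately show False using Dle Doff by simp
  qed
qed

end
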